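(* Let $\omega(r)=\frac{r^2}{\sin^2r}-1$. The map $u(x)=[[x]]+[[\sin x]]:(-\pi/4,\pi/4)\to{\bf Q}_2(\mathbb{R})$ is a Dirichlet $\omega$-minimizer, i.e. for every interval $(x-r,x+r)\subset(-\pi/4,\pi/4)$, $\mathrm{Dir}(u;(x-r,x+r))\le(1+\omega(r))\,\mathrm{Dir}(v;(x-r,x+r))$ where $v$ is Dirichlet minimizing with $v(x\pm r)=u(x\pm r)$; moreover the origin is a branch point of $u$.
   Context: ${\bf Q}_2(\mathbb{R})$ is the space of unordered pairs $[[a]]+[[b]]$ of reals with metric $\mathcal{G}([[a_1]]+[[a_2]],[[b_1]]+[[b_2]])=\min_\sigma(\sum_i|a_i-b_{\sigma(i)}|^2)^{1/2}$. For $u=[[u_1]]+[[u_2]]$ with $u_1\le u_2$ Lipschitz, $\mathrm{Dir}(u;I)=\int_I(u_1')^2+(u_2')^2$; Dirichlet minimizing with given endpoint values means minimizing $\mathrm{Dir}$ among (Sobolev) ${\bf Q}_2(\mathbb{R})$-valued maps with those endpoint values. For continuous $u$, with $\sigma(x)=\mathrm{card}(\mathrm{spt}\,u(x))$, a branch point is a point where $\sigma$ is discontinuous. *)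

theory Defs
  imports "HOL-Analysis.Analysis"
begin

text \<open>One-dimensional Sobolev space W^{1,2}(a,b): f is the integral of a square-integrable
  function g (i.e. f is absolutely continuous with derivative in L^2).\<close>
definition sob12 :: "real \<Rightarrow> real \<Rightarrow> (real \<Rightarrow> real) \<Rightarrow> bool" where
  "sob12 a b f \<longleftrightarrow> (\<exists>g. g absolutely_integrable_on {a..b}
      \<and> (\<lambda>t. (g t)\<^sup>2) integrable_on {a..b}
      \<and> (\<forall>t\<in>{a..b}. f t = f a + integral {a..t} g))"

text \<open>A Q_2(R)-valued Sobolev map on (a,b), represented through its ordered selection
  [[v1]] + [[v2]] with v1 \<le> v2.\<close>
definition Q2sob :: "real \<Rightarrow> real \<Rightarrow> (real \<Rightarrow> real) \<Rightarrow> (real \<Rightarrow> real) \<Rightarrow> bool" where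
  "Q2sob a b v1 v2 \<longleftrightarrow> sob12 a b v1 \<and> sob12 a b v2 \<and> (\<forall>t\<in>{a..b}. v1 t \<le> v2 t)"

definition Dir2 :: "real \<Rightarrow> real \<Rightarrow> (real \<Rightarrow> real) \<Rightarrow> (real \<Rightarrow> real) \<Rightarrow> real" where
  "Dir2 a b v1 v2 = integral {a..b} (\<lambda>t. (deriv v1 t)\<^sup>2 + (deriv v2 t)\<^sup>2)"

definition Dir_minimizing :: "real \<Rightarrow> real \<Rightarrow> (real \<Rightarrow> real) \<Rightarrow> (real \<Rightarrow> real) \<Rightarrow> bool" where
  "Dir_minimizing a b v1 v2 \<longleftrightarrow> Q2sob a b v1 v2 \<and>
     (\<forall>w1 w2. Q2sob a b w1 w2 \<and> w1 a = v1 a \<and> w2 a = v2 a \<and> w1 b = v1 b \<and> w2 b = v2 b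
        \<longrightarrow> Dir2 a b v1 v2 \<le> Dir2 a b w1 w2)"

definition omega :: "real \<Rightarrow> real" where
  "omega r = r\<^sup>2 / (sin r)\<^sup>2 - 1"

text \<open>Ordered selection of u(x) = [[x]] + [[sin x]].\<close>
definition u1 :: "real \<Rightarrow> real" where "u1 t = min t (sin t)"
definition u2 :: "real \<Rightarrow> real" where "u2 t = max t (sin t)"

text \<open>sigma(x) = card (spt u(x)).\<close>
definition sigma_u :: "real \<Rightarrow> nat" where "sigma_u t = card {t, sin t}"

end

theory Submission
  imports Defs
begin


lemma right_diff:
  fixes G :: "real \<Rightarrow> real"
  assumes "\<And>a b. G integrable_on {a..b}"
  obtains N where "negligible N"
    "\<And>x e. \<lbrakk>x \<notin> N; 0 < e\<rbrakk> \<Longrightarrow> \<exists>d>0. \<forall>h. 0 < h \<and> h < d \<longrightarrow> \<bar>integral {x..x+h} G / h - G x\<bar> < e"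
proof -
  obtain N where N: "negligible N"
       "\<And>x e. \<lbrakk>x \<notin> N; 0 < e\<rbrakk> \<Longrightarrow>
               \<exists>d>0. \<forall>h. 0 < h \<and> h < d \<longrightarrow>
                         norm(integral (cbox x (x + h *\<^sub>R One)) G /\<^sub>R h ^ DIM(real) - G x) < e"
    using integrable_ccontinuous_explicit[of G] assms by (metis cbox_interval)
  show ?thesis
    apply (rule that[OF N(1)])
    using N(2) by (simp add: cbox_interval divide_inverse_commute)
qed

lemma indef_deriv:
  fixes g :: "real \<Rightarrow> real"
  assumes gi: "g integrable_on {a..b}"
  obtains N where "negligible N"
    "\<And>x. x \<in> {a<..<b} \<Longrightarrow> x \<notin> N \<Longrightarrow> ((\<lambda>t. integral {a..t} g) has_real_derivative g x) (at x)"
proof -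
  define G where "G = (\<lambda>t. if t \<in> {a..b} then g t else 0)"
  have GI: "G integrable_on {c..d}" for c d
  proof -
    have "g integrable_on ({a..b} \<inter> {c..d})"
      using gi by (simp add: integrable_on_subinterval)
    then show ?thesis unfolding G_def using integrable_restrict_Int by blast
  qed
  have HI: "(\<lambda>t. G (-t)) integrable_on {c..d}" for c d
    using Henstock_Kurzweil_Integration.integrable_reflect_real[of G "-c" "-d"] GI by simp
  obtain N1 where N1: "negligible N1"
    "\<And>x e. \<lbrakk>x \<notin> N1; 0 < e\<rbrakk> \<Longrightarrow> \<exists>d>0. \<forall>h. 0 < h \<and> h < d \<longrightarrow> \<bar>integral {x..x+h} G / h - G x\<bar> < e"
    using right_diff[of G, OF GI] by blast
  obtain N2 where N2: "negligible N2"
    "\<And>x e. \<lbrakk>x \<notin> N2; 0 < e\<rbrakk> \<Longrightarrow> \<exists>d>0. \<forall>h. 0 < h \<and> h < d \<longrightarrow> \<bar>integral {x..x+h} (\<lambda>t. G (-t)) / h - G (- x)\<bar> < e"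
    using right_diff[of "\<lambda>t. G (-t)", OF HI] by blast
  have negN2: "negligible (uminus ` N2)"
  proof -
    have "uminus differentiable_on N2"
      using differentiable_on_minus[OF differentiable_on_ident, of N2] by (simp add: fun_Compl_def)
    then show ?thesis by (rule negligible_differentiable_image_negligible[OF order_refl N2(1)])
  qed
  show ?thesis
  proof (rule that[of "N1 \<union> uminus ` N2"])
    show "negligible (N1 \<union> uminus ` N2)" using N1(1) negN2 by simp
    fix x assume x: "x \<in> {a<..<b}" "x \<notin> N1 \<union> uminus ` N2"
    then have xN1: "x \<notin> N1" and xN2: "-x \<notin> N2" by (auto simp del: image_uminus_greaterThanLessThan, metis image_eqI minus_minus)
    have Gx: "G x = g x" using x by (simp add: G_def)
    let ?F = "\<lambda>t. integral {a..t} g"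
    have comb: "?F z - ?F y = integral {y..z} g" if "a \<le> y" "y \<le> z" "z \<le> b" for y z
    proof -
      have "g integrable_on {a..z}" using gi that by (simp add: integrable_on_subinterval)
      then have "integral {a..y} g + integral {y..z} g = integral {a..z} g"
        using Henstock_Kurzweil_Integration.integral_combine[OF that(1) that(2) \<open>g integrable_on {a..z}\<close>] by simp
      then show ?thesis by simp
    qed
    have GG: "integral {y..z} G = integral {y..z} g" if "a \<le> y" "z \<le> b" for y z
      by (rule integral_cong) (use that in \<open>auto simp: G_def\<close>)
    show "(?F has_real_derivative g x) (at x)"
      unfolding has_field_derivative_iff LIM_eq
    proof (intro allI impI)
      fix e :: real assume e: "0 < e"
      obtain d1 where d1: "d1 > 0" "\<And>h. 0 < h \<Longrightarrow> h < d1 \<Longrightarrow> \<bar>integral {x..x+h} G / h - G x\<bar> < e"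
        using N1(2)[OF xN1 e] by blast
      obtain d2 where d2: "d2 > 0" "\<And>h. 0 < h \<Longrightarrow> h < d2 \<Longrightarrow> \<bar>integral {-x..-x+h} (\<lambda>t. G (-t)) / h - G x\<bar> < e"
        using N2(2)[OF xN2 e] by auto
      show "\<exists>s>0. \<forall>y. y \<noteq> x \<and> norm (y - x) < s \<longrightarrow> norm ((?F y - ?F x) / (y - x) - g x) < e"
      proof (intro exI[of _ "min (min d1 d2) (min (b - x) (x - a))"] conjI allI impI)
        show "0 < min (min d1 d2) (min (b - x) (x - a))" using d1 d2 x by auto
        fix y assume y: "y \<noteq> x \<and> norm (y - x) < min (min d1 d2) (min (b - x) (x - a))"
        show "norm ((?F y - ?F x) / (y - x) - g x) < e"
        proof (cases "y > x")
          case True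
          have ya: "a \<le> x" "x \<le> y" "y \<le> b" using True x y by auto
          have "?F y - ?F x = integral {x..x + (y - x)} G"
            using comb[OF ya] GG[of x y] ya by simp
          moreover have "\<bar>integral {x..x + (y - x)} G / (y - x) - G x\<bar> < e"
            using d1(2)[of "y - x"] True y by simp
          ultimately show ?thesis using Gx by simp
        next
          case False
          then have yx: "y < x" using y by auto
          have ya: "a \<le> y" "y \<le> x" "x \<le> b" using yx x y by auto
          have "integral {-x..-x + (x - y)} (\<lambda>t. G (-t)) = integral {-x..-y} (\<lambda>t. G (-t))" by simp
          also have "\<dots> = integral {y..x} G" by (rule Henstock_Kurzweil_Integration.integral_reflect_real)
          also have "\<dots> = ?F x - ?F y" using comb[OF ya] GG[of y x] ya by simp
          finally have eq: "integral {-x..-x + (x - y)} (\<lambda>t. G (-t)) = ?F x - ?F y" .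
          have q: "(?F y - ?F x) / (y - x) = (?F x - ?F y) / (x - y)"
            by (metis minus_diff_eq minus_divide_divide)
          have "\<bar>integral {-x..-x + (x - y)} (\<lambda>t. G (-t)) / (x - y) - G x\<bar> < e"
            using d2(2)[of "x - y"] yx y by simp
          then show ?thesis using Gx eq q by simp
        qed
      qed
    qed
  qed
qed

lemma cs_int:
  fixes g :: "real \<Rightarrow> real"
  assumes ab: "a < b" and gi: "g integrable_on {a..b}" and g2: "(\<lambda>t. (g t)\<^sup>2) integrable_on {a..b}"
  shows "(integral {a..b} g)\<^sup>2 / (b - a) \<le> integral {a..b} (\<lambda>t. (g t)\<^sup>2)"
proof -
  define I where "I = integral {a..b} g"
  define m where "m = I / (b - a)"
  have e: "(\<lambda>t. (g t - m)\<^sup>2) = (\<lambda>t. ((g t)\<^sup>2 - 2 * m * g t) + m\<^sup>2)"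
    by (auto simp: power2_eq_square algebra_simps)
  have i1: "(\<lambda>t. (g t)\<^sup>2 - 2 * m * g t) integrable_on {a..b}"
  proof -
    have "(\<lambda>t. 2 * m * g t) integrable_on {a..b}" using integrable_on_cmult_left[OF gi, of "2*m"] by simp
    then show ?thesis using g2 by (rule integrable_diff[rotated])
  qed
  have "0 \<le> integral {a..b} (\<lambda>t. (g t - m)\<^sup>2)"
    by (rule integral_nonneg) (auto simp: e intro!: integrable_add i1)
  also have "\<dots> = integral {a..b} (\<lambda>t. (g t)\<^sup>2) - 2 * m * I + m\<^sup>2 * (b - a)"
  proof -
    have "integral {a..b} (\<lambda>t. ((g t)\<^sup>2 - 2 * m * g t) + m\<^sup>2)
        = integral {a..b} (\<lambda>t. (g t)\<^sup>2 - 2 * m * g t) + integral {a..b} (\<lambda>t. m\<^sup>2)"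
      by (rule integral_add[OF i1]) (rule integrable_const_ivl)
    also have "integral {a..b} (\<lambda>t. (g t)\<^sup>2 - 2 * m * g t)
        = integral {a..b} (\<lambda>t. (g t)\<^sup>2) - integral {a..b} (\<lambda>t. 2 * m * g t)"
      by (rule integral_diff[OF g2]) (use integrable_on_cmult_left[OF gi, of "2*m"] in simp)
    also have "integral {a..b} (\<lambda>t. 2 * m * g t) = 2 * m * I"
      unfolding I_def by (rule integral_mult_right)
    finally show ?thesis using ab by (simp add: e)
  qed
  finally have "2 * m * I - m\<^sup>2 * (b - a) \<le> integral {a..b} (\<lambda>t. (g t)\<^sup>2)" by simp
  moreover have "2 * m * I - m\<^sup>2 * (b - a) = I\<^sup>2 / (b - a)"
  proof -
    have d: "b - a \<noteq> 0" using ab by simp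
    have "m\<^sup>2 * (b - a) = I\<^sup>2 / (b - a)" using d by (simp add: m_def power2_eq_square)
    moreover have "2 * m * I = 2 * (I\<^sup>2 / (b - a))" by (simp add: m_def power2_eq_square)
    ultimately show ?thesis by simp
  qed
  ultimately show ?thesis by (simp add: I_def)
qed

lemma sob_ae:
  assumes s: "sob12 a b f" and ab: "a < b"
  obtains g N where "g integrable_on {a..b}" "(\<lambda>t. (g t)\<^sup>2) integrable_on {a..b}"
    "negligible N" "\<And>x. x \<in> {a<..<b} \<Longrightarrow> x \<notin> N \<Longrightarrow> deriv f x = g x"
    "integral {a..b} g = f b - f a"
proof -
  obtain g where g: "g absolutely_integrable_on {a..b}" "(\<lambda>t. (g t)\<^sup>2) integrable_on {a..b}"
    "\<And>t. t \<in> {a..b} \<Longrightarrow> f t = f a + integral {a..t} g"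
    using s unfolding sob12_def by blast
  have gi: "g integrable_on {a..b}" using g(1) set_lebesgue_integral_eq_integral(1) by blast
  obtain N where N: "negligible N"
    "\<And>x. x \<in> {a<..<b} \<Longrightarrow> x \<notin> N \<Longrightarrow> ((\<lambda>t. integral {a..t} g) has_real_derivative g x) (at x)"
    using indef_deriv[OF gi] by blast
  show ?thesis
  proof (rule that[OF gi g(2) N(1)])
    fix x assume x: "x \<in> {a<..<b}" "x \<notin> N"
    have "((\<lambda>t. f a + integral {a..t} g) has_real_derivative g x) (at x)"
      using N(2)[OF x] by (auto intro!: derivative_eq_intros)
    then have "(f has_real_derivative g x) (at x)"
    proof (rule has_field_derivative_transform_within_open[of _ _ _ "{a<..<b}"])
      show "open {a<..<b}" by simp
      show "x \<in> {a<..<b}" by (rule x(1))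
      fix y :: real assume "y \<in> {a<..<b}"
      then have "y \<in> {a..b}" by simp
      from g(3)[OF this] show "f a + integral {a..y} g = f y" by simp
    qed
    then show "deriv f x = g x" by (rule DERIV_imp_deriv)
  next
    show "integral {a..b} g = f b - f a" using g(3)[of b] ab by simp
  qed
qed

lemma Dir_lower:
  assumes q: "Q2sob a b v1 v2" and ab: "a < b"
  shows "((v1 b - v1 a)\<^sup>2 + (v2 b - v2 a)\<^sup>2) / (b - a) \<le> Dir2 a b v1 v2"
proof -
  obtain g1 N1 where G1: "g1 integrable_on {a..b}" "(\<lambda>t. (g1 t)\<^sup>2) integrable_on {a..b}"
    "negligible N1" "\<And>x. x \<in> {a<..<b} \<Longrightarrow> x \<notin> N1 \<Longrightarrow> deriv v1 x = g1 x"
    "integral {a..b} g1 = v1 b - v1 a"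
    using sob_ae[of a b v1] q ab unfolding Q2sob_def by blast
  obtain g2 N2 where G2: "g2 integrable_on {a..b}" "(\<lambda>t. (g2 t)\<^sup>2) integrable_on {a..b}"
    "negligible N2" "\<And>x. x \<in> {a<..<b} \<Longrightarrow> x \<notin> N2 \<Longrightarrow> deriv v2 x = g2 x"
    "integral {a..b} g2 = v2 b - v2 a"
    using sob_ae[of a b v2] q ab unfolding Q2sob_def by blast
  have "Dir2 a b v1 v2 = integral {a..b} (\<lambda>t. (g1 t)\<^sup>2 + (g2 t)\<^sup>2)"
    unfolding Dir2_def
  proof (rule integral_spike[of "N1 \<union> N2 \<union> {a, b}"])
    show "negligible (N1 \<union> N2 \<union> {a, b})" using G1(3) G2(3) by auto
    fix x assume "x \<in> {a..b} - (N1 \<union> N2 \<union> {a, b})"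
    then show "(g1 x)\<^sup>2 + (g2 x)\<^sup>2 = (deriv v1 x)\<^sup>2 + (deriv v2 x)\<^sup>2"
      using G1(4) G2(4) by auto
  qed
  also have "\<dots> = integral {a..b} (\<lambda>t. (g1 t)\<^sup>2) + integral {a..b} (\<lambda>t. (g2 t)\<^sup>2)"
    using G1(2) G2(2) by (rule integral_add)
  finally show ?thesis
    using cs_int[OF ab G1(1,2)] cs_int[OF ab G2(1,2)] G1(5) G2(5)
    by (simp add: add_divide_distrib)
qed



lemma fact3: "fact 3 = (6::real)" by (simp add: numeral_eq_Suc)

lemma sin_coeffs: "sin_coeff (Suc 0) = 1" "sin_coeff (Suc (Suc 0)) = 0" "sin_coeff 3 = -1/6" "sin_coeff 4 = 0"
     "sin_coeff 1 = 1" "sin_coeff 2 = 0"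
  by (simp_all add: sin_coeff_def fact3)

lemma sin_t3: fixes x :: real shows "\<bar>sin x - x\<bar> \<le> \<bar>x\<bar>^3 / 6"
proof -
  have S: "(\<Sum>m<3. sin_coeff m * x ^ m) = x"
    by (simp add: numeral_3_eq_3 sin_coeffs)
  have f3: "inverse (fact 3) = (1/6::real)" by (simp add: numeral_eq_Suc)
  show ?thesis using Maclaurin_sin_bound[of x 3, unfolded S f3] by simp
qed

lemma sin_t5: fixes x :: real shows "\<bar>sin x - (x - x^3/6)\<bar> \<le> \<bar>x\<bar>^5 / 120"
proof -
  have e: "{..<5::nat} = {0,1,2,3,4}" by auto
  have S: "(\<Sum>m<5. sin_coeff m * x ^ m) = x - x^3/6"
    unfolding e by (simp add: sin_coeffs)
  have f5: "inverse (fact 5) = (1/120::real)" by (simp add: numeral_eq_Suc)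
  show ?thesis using Maclaurin_sin_bound[of x 5, unfolded S f5] by simp
qed

lemma u_pos: "0 \<le> t \<Longrightarrow> u1 t = sin t \<and> u2 t = t"
  using sin_x_le_x[of t] by (simp add: u1_def u2_def min_def max_def)

lemma u_neg: "t \<le> 0 \<Longrightarrow> u1 t = t \<and> u2 t = sin t"
  using sin_x_le_x[of "-t"] by (simp add: u1_def u2_def min_def max_def)

lemma key_ineq:
  fixes x r :: real
  assumes r: "r > 0" and lo: "-(pi/4) \<le> x - r" and hi: "x + r \<le> pi/4"
  shows "2 * r * (3 * r + cos (2 * x) * sin (2 * r) / 2)
     \<le> (r\<^sup>2 / (sin r)\<^sup>2) * ((u1 (x + r) - u1 (x - r))\<^sup>2 + (u2 (x + r) - u2 (x - r))\<^sup>2)"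
proof -
  define s where "s = sin r"
  define co where "co = cos r"
  define C where "C = cos (2 * x)"
  define cx where "cx = cos x"
  define W where "W = r\<^sup>2 / s\<^sup>2"
  have pi4: "pi < 4" by (rule pi_less_4)
  have r1: "r \<le> 1" using lo hi pi4 by linarith
  have rpi: "r < pi" using r1 pi_gt3 by linarith
  have s0: "s > 0" unfolding s_def using r rpi by (simp add: sin_gt_zero)
  have sr: "s \<le> r" unfolding s_def using sin_x_le_x[of r] r by simp
  have co01: "0 \<le> co" "co \<le> 1" unfolding co_def using r rpi lo hi pi4
    by (auto intro!: cos_ge_zero)
  have C0: "0 \<le> C" unfolding C_def using lo hi r by (auto intro!: cos_ge_zero)
  have t5: "\<bar>s - (r - r^3/6)\<bar> \<le> \<bar>r\<bar>^5 / 120" unfolding s_def by (rule sin_t5)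
  have r3: "r^3 \<le> r" using r r1 by (simp add: power_le_one_iff mult_le_one power3_eq_cube)
  have r5: "r^5 \<le> r^3" using r r1 by (simp add: power_decreasing)
  have t5': "s \<le> r - r^3/6 + r^5/120" "r - r^3/6 - r^5/120 \<le> s"
  proof -
    have h: "\<bar>s - (r - r^3/6)\<bar> \<le> r^5/120" using t5 r by simp
    show "s \<le> r - r^3/6 + r^5/120" using h by linarith
    show "r - r^3/6 - r^5/120 \<le> s" using h by linarith
  qed
  have rs1: "r - s \<ge> 19 * r^3 / 120" using t5' r5 by linarith
  have s56: "s \<ge> r / 2" using t5' r5 r3 by linarith
  have Wge1: "W \<ge> 1" unfolding W_def using s0 sr by (simp add: power_mono)
  have Wle: "W \<le> 4"
  proof -
    have "r\<^sup>2 \<le> (2 * s)\<^sup>2" using s56 r by (intro power_mono) auto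
    then have "r\<^sup>2 \<le> 4 * s\<^sup>2" by (simp add: power_mult_distrib)
    then show ?thesis using s0 unfolding W_def by (simp add: divide_le_eq)
  qed
  have Ws: "W * s\<^sup>2 = r\<^sup>2" unfolding W_def using s0 by simp
  have sdiff: "sin (x + r) - sin (x - r) = 2 * cx * s"
    unfolding cx_def s_def by (simp add: sin_add sin_diff)
  have s2r: "sin (2 * r) = 2 * s * co" unfolding s_def co_def by (simp add: sin_double)
  have Ccx: "C = 2 * cx\<^sup>2 - 1" unfolding C_def cx_def by (simp add: cos_double_cos)
  define S0 where "S0 = (2 * r)\<^sup>2 + (sin (x + r) - sin (x - r))\<^sup>2"
  have WS0: "W * S0 = 4 * r\<^sup>2 * W + 2 * r\<^sup>2 * (1 + C)"
  proof -
    have "W * S0 = 4 * r\<^sup>2 * W + 4 * cx\<^sup>2 * (W * s\<^sup>2)"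
      unfolding S0_def sdiff by (simp add: algebra_simps power2_eq_square)
    then show ?thesis unfolding Ws Ccx by (simp add: algebra_simps)
  qed
  have sco: "s * co \<le> r" using sr co01 s0 by (smt (verit) mult_left_le)
  have rW: "4 * r\<^sup>2 * W - 4 * r\<^sup>2 \<ge> 4 * (r\<^sup>2 - s\<^sup>2)"
  proof -
    have "4 * r\<^sup>2 * W - 4 * r\<^sup>2 = 4 * (W - 1) * r\<^sup>2" by (simp add: algebra_simps)
    also have "\<dots> \<ge> 4 * (W - 1) * s\<^sup>2"
      using Wge1 sr s0 by (intro mult_left_mono power_mono) auto
    also have "4 * (W - 1) * s\<^sup>2 = 4 * (r\<^sup>2 - s\<^sup>2)" using Ws by (simp add: algebra_simps)
    finally show ?thesis by simp
  qed
  have main0: "2 * r * (3 * r + C * sin (2 * r) / 2) + 4 * (r\<^sup>2 - s\<^sup>2) \<le> W * S0"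
  proof -
    have "2 * r * (3 * r + C * sin (2 * r) / 2) = 6 * r\<^sup>2 + 2 * r * C * (s * co)"
      unfolding s2r by (simp add: algebra_simps power2_eq_square)
    moreover have "2 * r * C * (s * co) \<le> 2 * r * C * r"
      using sco r C0 by (intro mult_left_mono) auto
    moreover have "2 * r * C * r = 2 * r\<^sup>2 * C" by (simp add: power2_eq_square)
    moreover have "2 * r\<^sup>2 * (1 + C) = 2 * r\<^sup>2 + 2 * r\<^sup>2 * C" by (simp add: algebra_simps)
    ultimately show ?thesis using WS0 rW by linarith
  qed
  have rs2: "r\<^sup>2 - s\<^sup>2 \<ge> 19 * r^4 / 120"
  proof -
    have "r\<^sup>2 - s\<^sup>2 = (r - s) * (r + s)" by (simp add: algebra_simps power2_eq_square)
    also have "\<dots> \<ge> (19 * r^3 / 120) * r"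
      using rs1 s0 r sr by (intro mult_mono) auto
    finally show ?thesis by (simp add: power_numeral_reduce algebra_simps)
  qed
  show ?thesis
  proof (cases "x - r < 0 \<and> 0 < x + r")
    case False
    then have dj: "\<not> x - r < 0 \<or> \<not> 0 < x + r" by auto
    have eqS: "(u1 (x + r) - u1 (x - r))\<^sup>2 + (u2 (x + r) - u2 (x - r))\<^sup>2 = S0"
    proof (rule disjE[OF dj])
      show ?thesis if "\<not> x - r < 0"
      proof -
        have e: "u1 (x - r) = sin (x - r)" "u2 (x - r) = x - r" "u1 (x + r) = sin (x + r)" "u2 (x + r) = x + r"
          using that u_pos[of "x - r"] u_pos[of "x + r"] r by auto
        show ?thesis unfolding e S0_def by (simp add: algebra_simps power2_eq_square)
      qed
      show ?thesis if "\<not> 0 < x + r"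
      proof -
        have e: "u1 (x - r) = x - r" "u2 (x - r) = sin (x - r)" "u1 (x + r) = x + r" "u2 (x + r) = sin (x + r)"
          using that u_neg[of "x - r"] u_neg[of "x + r"] r by auto
        show ?thesis unfolding e S0_def by (simp add: algebra_simps power2_eq_square)
      qed
    qed
    have r4: "0 \<le> 19 * r^4/120" by simp
    from main0 rs2 r4 have "2 * r * (3 * r + C * sin (2 * r) / 2) \<le> W * S0" by (smt (verit))
    then show ?thesis using eqS unfolding C_def W_def s_def by simp
  next
    case True
    define a where "a = x - r"
    define c where "c = x + r"
    have a0: "a < 0" and c0: "0 < c" using True a_def c_def by auto
    have Seq: "(u1 (x + r) - u1 (x - r))\<^sup>2 + (u2 (x + r) - u2 (x - r))\<^sup>2
        = S0 - 2 * ((sin a - a) * (c - sin c))"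
    proof -
      have e: "u1 a = a" "u2 a = sin a" "u1 c = sin c" "u2 c = c"
        using u_neg[of a] u_pos[of c] a0 c0 by auto
      have "c - a = 2 * r" unfolding a_def c_def by simp
      then show ?thesis unfolding S0_def a_def[symmetric] c_def[symmetric] e
        by (simp add: algebra_simps power2_eq_square)
    qed
    have ta: "0 \<le> sin a - a" "sin a - a \<le> (-a)^3 / 6"
    proof -
      have h: "\<bar>sin a - a\<bar> \<le> (-a)^3 / 6" using sin_t3[of a] a0 by simp
      show "0 \<le> sin a - a" using sin_x_le_x[of "-a"] a0 by simp
      show "sin a - a \<le> (-a)^3 / 6" using h by linarith
    qed
    have tc: "0 \<le> c - sin c" "c - sin c \<le> c^3 / 6"
    proof -
      have h: "\<bar>sin c - c\<bar> \<le> c^3 / 6" using sin_t3[of c] c0 by simp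
      show "0 \<le> c - sin c" using sin_x_le_x[of c] c0 by simp
      show "c - sin c \<le> c^3 / 6" using h by linarith
    qed
    have ac: "(-a) * c \<le> r\<^sup>2"
    proof -
      have "c - a = 2 * r" unfolding a_def c_def by simp
      then have "r\<^sup>2 - (-a) * c = ((c + a) / 2)\<^sup>2" by (simp add: power2_eq_square algebra_simps)
      then show ?thesis by (smt (verit) zero_le_power2)
    qed
    have P: "(sin a - a) * (c - sin c) \<le> r^6 / 36"
    proof -
      have "(sin a - a) * (c - sin c) \<le> ((-a)^3 / 6) * (c^3 / 6)"
      proof (rule mult_mono)
        show "0 \<le> (-a)^3 / 6" using a0 by simp
      qed (use ta tc in auto)
      also have "\<dots> = ((-a) * c)^3 / 36" by (simp add: power_mult_distrib)
      also have "\<dots> \<le> (r\<^sup>2)^3 / 36"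
      proof -
        have "0 \<le> (-a) * c" using a0 c0 by (simp add: mult_nonpos_nonneg)
        then show ?thesis using ac by (intro divide_right_mono power_mono) auto
      qed
      finally show ?thesis by (simp add: power_mult[symmetric])
    qed
    have P0: "0 \<le> (sin a - a) * (c - sin c)" using ta tc by simp
    have WP: "W * (2 * ((sin a - a) * (c - sin c))) \<le> 4 * (2 * (r^6 / 36))"
      using Wle P P0 Wge1 by (intro mult_mono) auto
    have r64: "r^6 \<le> r^4" using r r1 by (simp add: power_decreasing)
    have "W * (S0 - 2 * ((sin a - a) * (c - sin c))) \<ge> 2 * r * (3 * r + C * sin (2 * r) / 2)"
    proof -
      have d: "W * (S0 - 2 * ((sin a - a) * (c - sin c))) = W * S0 - W * (2 * ((sin a - a) * (c - sin c)))"
        by (simp add: right_diff_distrib)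
      have r40: "0 \<le> r^4" by simp
      define Q where "Q = W * (2 * ((sin a - a) * (c - sin c)))"
      define L where "L = 2 * r * (3 * r + C * sin (2 * r) / 2)"
      define D where "D = r\<^sup>2 - s\<^sup>2"
      define R4 where "R4 = r^4"
      have m: "L + 4 * D \<le> W * S0" using main0 unfolding L_def D_def .
      have e1: "19 * R4 / 120 \<le> D" using rs2 unfolding D_def R4_def .
      have e2: "Q \<le> 8 * R4 / 36" using WP r64 unfolding Q_def R4_def by linarith
      have e3: "0 \<le> R4" unfolding R4_def by simp
      have "L \<le> W * S0 - Q" using m e1 e2 e3 by linarith
      then show ?thesis unfolding d Q_def L_def .
    qed
    then show ?thesis using Seq unfolding C_def W_def s_def by simp
  qed
qed

lemma deriv_u:
  fixes t :: real assumes "t \<noteq> 0"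
  shows "(deriv u1 t)\<^sup>2 + (deriv u2 t)\<^sup>2 = 1 + (cos t)\<^sup>2"
proof (cases "t > 0")
  case True
  have d1: "(u1 has_real_derivative cos t) (at t)"
  proof (rule has_field_derivative_transform_within_open[of sin _ _ "{0<..}"])
    show "(sin has_real_derivative cos t) (at t)" by (rule DERIV_sin)
  qed (use True u_pos in auto)
  have d2: "(u2 has_real_derivative 1) (at t)"
  proof (rule has_field_derivative_transform_within_open[of "\<lambda>x. x" _ _ "{0<..}"])
    show "((\<lambda>x. x) has_real_derivative 1) (at t)" by (rule DERIV_ident)
  qed (use True u_pos in auto)
  show ?thesis using DERIV_imp_deriv[OF d1] DERIV_imp_deriv[OF d2] by simp
next
  case False
  then have tn: "t < 0" using assms by simp
  have d1: "(u1 has_real_derivative 1) (at t)"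
  proof (rule has_field_derivative_transform_within_open[of "\<lambda>x. x" _ _ "{..<0}"])
    show "((\<lambda>x. x) has_real_derivative 1) (at t)" by (rule DERIV_ident)
  qed (use tn u_neg in auto)
  have d2: "(u2 has_real_derivative cos t) (at t)"
  proof (rule has_field_derivative_transform_within_open[of sin _ _ "{..<0}"])
    show "(sin has_real_derivative cos t) (at t)" by (rule DERIV_sin)
  qed (use tn u_neg in auto)
  show ?thesis using DERIV_imp_deriv[OF d1] DERIV_imp_deriv[OF d2] by simp
qed

lemma Dir_u:
  fixes a c :: real assumes ac: "a \<le> c"
  shows "Dir2 a c u1 u2 = 3 * (c - a) / 2 + (sin (2 * c) - sin (2 * a)) / 4"
proof -
  have "Dir2 a c u1 u2 = integral {a..c} (\<lambda>t. 1 + (cos t)\<^sup>2)"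
    unfolding Dir2_def
    by (rule integral_spike[of "{0}"]) (auto simp: deriv_u)
  also have "\<dots> = 3 * (c - a) / 2 + (sin (2 * c) - sin (2 * a)) / 4"
  proof (rule integral_unique)
    let ?F = "\<lambda>t::real. 3 * t / 2 + sin (2 * t) / 4"
    have "((\<lambda>t. 1 + (cos t)\<^sup>2) has_integral (?F c - ?F a)) {a..c}"
    proof (rule fundamental_theorem_of_calculus[OF ac])
      fix t assume "t \<in> {a..c}"
      have "(?F has_real_derivative (3 / 2 + cos (2 * t) * 2 / 4)) (at t within {a..c})"
        by (auto intro!: derivative_eq_intros)
      moreover have "3 / 2 + cos (2 * t) * 2 / 4 = 1 + (cos t)\<^sup>2"
        by (simp add: cos_double_cos diff_divide_distrib)
      ultimately show "(?F has_vector_derivative (1 + (cos t)\<^sup>2)) (at t within {a..c})"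
        by (simp add: has_real_derivative_iff_has_vector_derivative)
    qed
    then show "((\<lambda>t. 1 + (cos t)\<^sup>2) has_integral (3 * (c - a) / 2 + (sin (2 * c) - sin (2 * a)) / 4)) {a..c}"
      by (simp add: algebra_simps diff_divide_distrib)
  qed
  finally show ?thesis .
qed

lemma sin_ne: fixes t :: real assumes "t \<noteq> 0" "\<bar>t\<bar> < 1" shows "sin t \<noteq> t"
proof -
  have key: "sin t < t" if "0 < t" "t < 1" for t :: real
  proof -
    have h: "\<bar>sin t - (t - t^3/6)\<bar> \<le> t^5/120" using sin_t5[of t] that by simp
    have "t^5 \<le> t^3" using that by (simp add: power_decreasing)
    moreover have "0 < t^3" using that by simp
    ultimately show ?thesis using h by linarith
  qed
  show ?thesis
  proof (cases "t > 0")
    case True then show ?thesis using key[of t] assms by simp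
  next
    case False
    then have "0 < -t" "-t < 1" using assms by auto
    from key[OF this] show ?thesis by simp
  qed
qed

lemma branch: "\<not> continuous (at 0 within {-(pi/4)<..<pi/4}) (\<lambda>t. real (sigma_u t))"
proof
  let ?S = "{-(pi/4)<..<pi/4::real}"
  let ?f = "\<lambda>t. real (sigma_u t)"
  assume "continuous (at 0 within ?S) ?f"
  then have l1: "(?f \<longlongrightarrow> ?f 0) (at 0 within ?S)" by (simp add: continuous_within)
  have f0: "?f 0 = 1" by (simp add: sigma_u_def)
  have ev: "eventually (\<lambda>t. ?f t = 2) (at 0 within ?S)"
    unfolding eventually_at
  proof (intro exI[of _ 1] conjI allI impI ballI)
    fix t assume t: "t \<in> ?S" "t \<noteq> 0 \<and> dist t 0 < 1"
    then have "t \<noteq> 0" "\<bar>t\<bar> < 1" by auto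
    then have "sin t \<noteq> t" by (rule sin_ne)
    then show "?f t = 2" by (simp add: sigma_u_def)
  qed simp
  have l2: "(?f \<longlongrightarrow> 2) (at 0 within ?S)"
    by (rule tendsto_eventually[OF ev])
  have "0 \<in> interior ?S" using pi_gt_zero by (simp add: interior_open)
  then have "0 islimpt ?S" by (rule interior_limit_point)
  then have nt: "at 0 within ?S \<noteq> bot" using trivial_limit_within by blast
  from tendsto_unique[OF nt l1 l2] f0 show False by simp
qed


theorem mainTheorem9:
  shows "(\<forall>x r v1 v2. r > 0 \<and> {x - r<..<x + r} \<subseteq> {-(pi/4)<..<pi/4}
            \<and> Dir_minimizing (x - r) (x + r) v1 v2
            \<and> v1 (x - r) = u1 (x - r) \<and> v2 (x - r) = u2 (x - r)
            \<and> v1 (x + r) = u1 (x + r) \<and> v2 (x + r) = u2 (x + r)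
          \<longrightarrow> Dir2 (x - r) (x + r) u1 u2 \<le> (1 + omega r) * Dir2 (x - r) (x + r) v1 v2)
       \<and> \<not> continuous (at 0 within {-(pi/4)<..<pi/4}) (\<lambda>t. real (sigma_u t))"
proof (intro conjI allI impI)
  show "\<not> continuous (at 0 within {-(pi/4)<..<pi/4}) (\<lambda>t. real (sigma_u t))" by (rule branch)
next
  fix x r :: real and v1 v2 :: "real \<Rightarrow> real"
  assume H: "r > 0 \<and> {x - r<..<x + r} \<subseteq> {-(pi/4)<..<pi/4}
            \<and> Dir_minimizing (x - r) (x + r) v1 v2
            \<and> v1 (x - r) = u1 (x - r) \<and> v2 (x - r) = u2 (x - r)
            \<and> v1 (x + r) = u1 (x + r) \<and> v2 (x + r) = u2 (x + r)"
  then have r: "r > 0" and sub: "{x - r<..<x + r} \<subseteq> {-(pi/4)<..<pi/4}"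
    and dm: "Dir_minimizing (x - r) (x + r) v1 v2"
    and e: "v1 (x - r) = u1 (x - r)" "v2 (x - r) = u2 (x - r)"
           "v1 (x + r) = u1 (x + r)" "v2 (x + r) = u2 (x + r)" by auto
  have lohi: "-(pi/4) \<le> x - r" "x + r \<le> pi/4"
    using sub r unfolding greaterThanLessThan_subseteq_greaterThanLessThan by auto
  have q: "Q2sob (x - r) (x + r) v1 v2" using dm unfolding Dir_minimizing_def by blast
  define S where "S = (u1 (x + r) - u1 (x - r))\<^sup>2 + (u2 (x + r) - u2 (x - r))\<^sup>2"
  define W where "W = r\<^sup>2 / (sin r)\<^sup>2"
  define Du where "Du = 3 * r + cos (2 * x) * sin (2 * r) / 2"
  have low: "S / (2 * r) \<le> Dir2 (x - r) (x + r) v1 v2"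
    using Dir_lower[OF q] r unfolding e S_def by simp
  have sd: "sin (2 * (x + r)) - sin (2 * (x - r)) = 2 * cos (2 * x) * sin (2 * r)"
  proof -
    have "2 * (x + r) = 2 * x + 2 * r" "2 * (x - r) = 2 * x - 2 * r" by simp_all
    then show ?thesis by (simp add: sin_add sin_diff)
  qed
  have du: "Dir2 (x - r) (x + r) u1 u2 = Du"
    using Dir_u[of "x - r" "x + r"] r sd unfolding Du_def by simp
  have key: "2 * r * Du \<le> W * S"
    using key_ineq[OF r lohi] unfolding Du_def W_def S_def .
  have om: "1 + omega r = W" unfolding omega_def W_def by simp
  have W0: "0 \<le> W" unfolding W_def by simp
  have "Du \<le> W * (S / (2 * r))"
    using key r by (simp add: field_simps)
  also have "\<dots> \<le> W * Dir2 (x - r) (x + r) v1 v2"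
    using low W0 by (rule mult_left_mono)
  finally show "Dir2 (x - r) (x + r) u1 u2 \<le> (1 + omega r) * Dir2 (x - r) (x + r) v1 v2"
    unfolding du om .
qed

end
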